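(* Let $t$ be a positive integer and let $p_1(x_1,\ldots,x_t)$, $p_2(x_1,\ldots,x_t)$ be polynomials with integer coefficients. Suppose there exist integers $s_1,s_2\ge 1$, matrices $A_1,M_1,N_1,B_1\in\mathbb{Z}^{s_1\times s_1}_{\rm uptr}$ and $A_2,M_2,N_2,B_2\in\mathbb{Z}^{s_2\times s_2}_{\rm uptr}$ such that \[A_1M_1^{a_1}N_1M_1^{a_2}N_1\cdots N_1M_1^{a_t}B_1=p_1(a_1,\ldots,a_t)E_{s_1}\] and \[A_2M_2^{a_1}N_2M_2^{a_2}N_2\cdots N_2M_2^{a_t}B_2=p_2(a_1,\ldots,a_t)E_{s_2}\] for all $a_1,\ldots,a_t\in\mathbb{N}$ (each product containing $t-1$ factors $N_j$). Then: (i) there exist $s_3\ge 1$ and $A_3,M_3,N_3,B_3\in\mathbb{Z}^{s_3\times s_3}_{\rm uptr}$ such that $A_3M_3^{a_1}N_3M_3^{a_2}N_3\cdots N_3M_3^{a_t}B_3=(p_1+p_2)(a_1,\ldots,a_t)E_{s_3}$ for all $a_1,\ldots,a_t\in\mathbb{N}$; (ii) there exist $s_4\ge 1$ and $A_4,M_4,N_4,B_4\in\mathbb{Z}^{s_4\times s_4}_{\rm uptr}$ such that $A_4M_4^{a_1}N_4M_4^{a_2}N_4\cdots N_4M_4^{a_t}B_4=(p_1p_2)(a_1,\ldots,a_t)E_{s_4}$ for all $a_1,\ldots,a_t\in\mathbb{N}$; (iii) for every $c\in\mathbb{Z}$ there exists $A_5\in\mathbb{Z}^{s_1\times s_1}_{\rm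 uptr}$ such that $A_5M_1^{a_1}N_1M_1^{a_2}N_1\cdots N_1M_1^{a_t}B_1=c\,p_1(a_1,\ldots,a_t)E_{s_1}$ for all $a_1,\ldots,a_t\in\mathbb{N}$.
   Context: $\mathbb{N}$ is the set of nonnegative integers. $\mathbb{Z}^{s\times s}_{\rm uptr}$ is the set of upper-triangular $s\times s$ integer matrices. $E_s$ denotes the $s\times s$ matrix whose only nonzero entry is the entry in row $1$, column $s$, equal to $1$. *)

theory Defs
  imports "Jordan_Normal_Form.Matrix" "HOL-Library.Poly_Mapping"
begin

(* Multivariate integer polynomials: finitely supported coefficient maps from
   monomials (exponent vectors, nat \<Rightarrow>\<^sub>0 nat) to int. *)
type_synonym int_mpoly = "(nat \<Rightarrow>\<^sub>0 nat) \<Rightarrow>\<^sub>0 int"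

(* p only involves the variables x_1..x_t (indices 0..t-1) *)
definition mpoly_in_vars :: "nat \<Rightarrow> int_mpoly \<Rightarrow> bool" where
  "mpoly_in_vars t p \<longleftrightarrow> (\<forall>m \<in> Poly_Mapping.keys p. Poly_Mapping.keys m \<subseteq> {..<t})"

definition mpoly_eval :: "int_mpoly \<Rightarrow> nat list \<Rightarrow> int" where
  "mpoly_eval p a = (\<Sum>m\<in>Poly_Mapping.keys p. Poly_Mapping.lookup p m * (\<Prod>i\<in>Poly_Mapping.keys m. int (a ! i) ^ Poly_Mapping.lookup m i))"

definition uptr_mat :: "nat \<Rightarrow> int mat \<Rightarrow> bool" where
  "uptr_mat s A \<longleftrightarrow> A \<in> carrier_mat s s \<and> upper_triangular A"

definition E_mat :: "nat \<Rightarrow> int mat" where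
  "E_mat s = mat s s (\<lambda>(i,j). if i = 0 \<and> j = s - 1 then 1 else 0)"

fun word_prod :: "int mat \<Rightarrow> int mat \<Rightarrow> nat list \<Rightarrow> int mat" where
  "word_prod M N [] = M ^\<^sub>m 0"
| "word_prod M N [x] = M ^\<^sub>m x"
| "word_prod M N (x # y # xs) = M ^\<^sub>m x * N * word_prod M N (y # xs)"

end

theory Submission
  imports Defs
begin



definition mev :: "nat list \<Rightarrow> (nat \<Rightarrow>\<^sub>0 nat) \<Rightarrow> int" where
  "mev a m = (\<Prod>i\<in>Poly_Mapping.keys m. int (a ! i) ^ Poly_Mapping.lookup m i)"

lemma mev_add: "mev a (m1 + m2) = mev a m1 * mev a m2"
proof -
  let ?S = "Poly_Mapping.keys m1 \<union> Poly_Mapping.keys m2"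
  have fin: "finite ?S" by simp
  have e: "mev a m = (\<Prod>i\<in>?S. int (a ! i) ^ Poly_Mapping.lookup m i)"
    if "Poly_Mapping.keys m \<subseteq> ?S" for m
    unfolding mev_def
    by (rule prod.mono_neutral_left[OF fin that]) (auto simp: in_keys_iff)
  have "mev a (m1 + m2) = (\<Prod>i\<in>?S. int (a ! i) ^ Poly_Mapping.lookup (m1+m2) i)"
    by (rule e) (rule keys_add)
  also have "\<dots> = (\<Prod>i\<in>?S. int (a ! i) ^ Poly_Mapping.lookup m1 i * int (a ! i) ^ Poly_Mapping.lookup m2 i)"
    by (simp add: lookup_add power_add)
  also have "\<dots> = mev a m1 * mev a m2"
    by (simp add: prod.distrib e)
  finally show ?thesis .
qed

lemma eval_alt: "mpoly_eval p a = (\<Sum>m\<in>Poly_Mapping.keys p. Poly_Mapping.lookup p m * mev a m)"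
  unfolding mpoly_eval_def mev_def ..

lemma eval_add: "mpoly_eval (p + q) a = mpoly_eval p a + mpoly_eval q a"
  unfolding eval_alt
  by (rule setsum_keys_plus_distrib[where f="\<lambda>k v. v * mev a k"]) (auto simp: distrib_right)

lemma eval_zero: "mpoly_eval 0 a = 0"
  by (simp add: mpoly_eval_def)

lemma eval_single: "mpoly_eval (Poly_Mapping.single m c) a = c * mev a m"
  by (simp add: eval_alt)

lemma eval_sum: "finite S \<Longrightarrow> mpoly_eval (\<Sum>x\<in>S. f x) a = (\<Sum>x\<in>S. mpoly_eval (f x) a)"
  by (induction S rule: finite_induct) (auto simp: eval_zero eval_add)

lemma decomp: "p = (\<Sum>m\<in>Poly_Mapping.keys p. Poly_Mapping.single m (Poly_Mapping.lookup p m))"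
proof (rule poly_mapping_eqI)
  fix k
  show "Poly_Mapping.lookup p k = Poly_Mapping.lookup (\<Sum>m\<in>Poly_Mapping.keys p. Poly_Mapping.single m (Poly_Mapping.lookup p m)) k"
    by (simp add: lookup_sum lookup_single when_def in_keys_iff)
qed

lemma eval_mult: "mpoly_eval (p * q) a = mpoly_eval p a * mpoly_eval q a"
proof -
  let ?P = "Poly_Mapping.keys p" and ?Q = "Poly_Mapping.keys q"
  have "p * q = (\<Sum>m\<in>?P. Poly_Mapping.single m (Poly_Mapping.lookup p m)) *
                (\<Sum>n\<in>?Q. Poly_Mapping.single n (Poly_Mapping.lookup q n))"
    using decomp[of p] decomp[of q] by simp
  also have "\<dots> = (\<Sum>m\<in>?P. \<Sum>n\<in>?Q. Poly_Mapping.single (m+n) (Poly_Mapping.lookup p m * Poly_Mapping.lookup q n))"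
    by (simp add: sum_product mult_single)
  finally have "mpoly_eval (p*q) a = (\<Sum>m\<in>?P. \<Sum>n\<in>?Q. Poly_Mapping.lookup p m * Poly_Mapping.lookup q n * mev a (m+n))"
    by (simp add: eval_sum eval_single)
  also have "\<dots> = (\<Sum>m\<in>?P. \<Sum>n\<in>?Q. (Poly_Mapping.lookup p m * mev a m) * (Poly_Mapping.lookup q n * mev a n))"
    by (simp add: mev_add mult_ac)
  also have "\<dots> = mpoly_eval p a * mpoly_eval q a"
    by (simp add: eval_alt sum_product)
  finally show ?thesis .
qed



lemma word_prod_carrier:
  assumes "M \<in> carrier_mat s s" "N \<in> carrier_mat s s"
  shows "word_prod M N a \<in> carrier_mat s s"
  using assms by (induction M N a rule: word_prod.induct) auto

definition bd :: "int mat \<Rightarrow> int mat \<Rightarrow> int mat" where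
  "bd X Y = four_block_mat X (0\<^sub>m (dim_row X) (dim_col Y)) (0\<^sub>m (dim_row Y) (dim_col X)) Y"

lemma bd_carrier: "X \<in> carrier_mat n n \<Longrightarrow> Y \<in> carrier_mat m m \<Longrightarrow> bd X Y \<in> carrier_mat (n+m) (n+m)"
  unfolding bd_def by auto

lemma bd_mult:
  assumes "X \<in> carrier_mat n n" "Y \<in> carrier_mat m m" "X' \<in> carrier_mat n n" "Y' \<in> carrier_mat m m"
  shows "bd X Y * bd X' Y' = bd (X * X') (Y * Y')"
proof -
  have d: "dim_row X = n" "dim_col X = n" "dim_row Y = m" "dim_col Y = m"
     "dim_row X' = n" "dim_col X' = n" "dim_row Y' = m" "dim_col Y' = m" using assms by auto
  show ?thesis unfolding bd_def d
    using mult_four_block_mat[OF assms(1) zero_carrier_mat[of n m] zero_carrier_mat[of m n] assms(2) assms(3) zero_carrier_mat[of n m] zero_carrier_mat[of m n] assms(4)]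
    using assms by simp
qed

lemma bd_pow:
  assumes "X \<in> carrier_mat n n" "Y \<in> carrier_mat m m"
  shows "bd X Y ^\<^sub>m k = bd (X ^\<^sub>m k) (Y ^\<^sub>m k)"
proof (induction k)
  case 0
  then show ?case using assms unfolding bd_def by auto
next
  case (Suc k)
  have "bd (X ^\<^sub>m k) (Y ^\<^sub>m k) * bd X Y = bd (X ^\<^sub>m k * X) (Y ^\<^sub>m k * Y)"
    by (rule bd_mult) (use assms in auto)
  then show ?case using Suc by simp
qed

lemma bd_word:
  assumes "M \<in> carrier_mat n n" "N \<in> carrier_mat n n" "M' \<in> carrier_mat m m" "N' \<in> carrier_mat m m"
  shows "word_prod (bd M M') (bd N N') a = bd (word_prod M N a) (word_prod M' N' a)"
proof (induction a rule: induct_list012)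
  case 1
  have "bd (1\<^sub>m n) (1\<^sub>m m) = 1\<^sub>m (n+m)" unfolding bd_def by simp
  then show ?case using assms bd_carrier[OF assms(1,3)] by (simp add: bd_pow)
next
  case (2 x)
  then show ?case using assms by (simp add: bd_pow)
next
  case (3 x y xs)
  have "bd (M ^\<^sub>m x) (M' ^\<^sub>m x) * bd N N' = bd (M ^\<^sub>m x * N) (M' ^\<^sub>m x * N')"
    by (rule bd_mult) (use assms in auto)
  moreover have "bd (M ^\<^sub>m x * N) (M' ^\<^sub>m x * N') * bd (word_prod M N (y # xs)) (word_prod M' N' (y # xs))
     = bd (M ^\<^sub>m x * N * word_prod M N (y # xs)) (M' ^\<^sub>m x * N' * word_prod M' N' (y # xs))"
    by (rule bd_mult) (use assms word_prod_carrier in auto)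
  ultimately show ?case using 3 assms by (simp add: bd_pow)
qed



definition Kmat :: "nat \<Rightarrow> nat \<Rightarrow> int mat" where
  "Kmat n m = mat n m (\<lambda>(i,j). if i = 0 \<and> j = 0 then 1 else 0)"
definition Lmat :: "nat \<Rightarrow> nat \<Rightarrow> int mat" where
  "Lmat n m = mat n m (\<lambda>(i,j). if i = n - 1 \<and> j = m - 1 then 1 else 0)"
definition Fmat :: "nat \<Rightarrow> nat \<Rightarrow> int mat" where
  "Fmat n m = mat n m (\<lambda>(i,j). if i = 0 \<and> j = m - 1 then 1 else 0)"

lemma EL: "n \<ge> 1 \<Longrightarrow> E_mat n * Lmat n m = Fmat n m"
  by (rule eq_matI) (auto simp: E_mat_def Lmat_def Fmat_def scalar_prod_def
      if_distrib[of "\<lambda>x. x * _"] sum.delta cong: if_cong)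

lemma KE: "m \<ge> 1 \<Longrightarrow> Kmat n m * E_mat m = Fmat n m"
  by (rule eq_matI) (auto simp: E_mat_def Kmat_def Fmat_def scalar_prod_def
      if_distrib[of "\<lambda>x. x * _"] sum.delta cong: if_cong)

lemma F_E: "n \<ge> 1 \<Longrightarrow> m \<ge> 1 \<Longrightarrow>
  four_block_mat (0\<^sub>m n n) (c \<cdot>\<^sub>m Fmat n m) (0\<^sub>m m n) (0\<^sub>m m m) = c \<cdot>\<^sub>m E_mat (n+m)"
  by (rule eq_matI) (auto simp: E_mat_def Fmat_def)



lemma part_sum:
  assumes n1: "n \<ge> 1" and m1: "m \<ge> 1"
    and c: "A1 \<in> carrier_mat n n" "W1 \<in> carrier_mat n n" "B1 \<in> carrier_mat n n"
      "A2 \<in> carrier_mat m m" "W2 \<in> carrier_mat m m" "B2 \<in> carrier_mat m m"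
    and e1: "A1 * W1 * B1 = x \<cdot>\<^sub>m E_mat n"
    and e2: "A2 * W2 * B2 = y \<cdot>\<^sub>m E_mat m"
  shows "four_block_mat A1 (Kmat n m * A2) (0\<^sub>m m n) (0\<^sub>m m m) * bd W1 W2
     * four_block_mat (0\<^sub>m n n) (B1 * Lmat n m) (0\<^sub>m m n) B2 = (x + y) \<cdot>\<^sub>m E_mat (n+m)"
proof -
  have K: "Kmat n m \<in> carrier_mat n m" and L: "Lmat n m \<in> carrier_mat n m"
    and F: "Fmat n m \<in> carrier_mat n m" and E1: "E_mat n \<in> carrier_mat n n"
    and E2: "E_mat m \<in> carrier_mat m m"
    by (auto simp: Kmat_def Lmat_def Fmat_def E_mat_def)
  have KA: "Kmat n m * A2 \<in> carrier_mat n m" using K c by auto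
  have BL: "B1 * Lmat n m \<in> carrier_mat n m" using L c by auto
  have dW: "dim_row W1 = n" "dim_col W1 = n" "dim_row W2 = m" "dim_col W2 = m" using c by auto
  have s1: "four_block_mat A1 (Kmat n m * A2) (0\<^sub>m m n) (0\<^sub>m m m) * bd W1 W2
     = four_block_mat (A1 * W1) (Kmat n m * A2 * W2) (0\<^sub>m m n) (0\<^sub>m m m)"
    unfolding bd_def dW
    using mult_four_block_mat[OF c(1) KA zero_carrier_mat[of m n] zero_carrier_mat[of m m]
        c(2) zero_carrier_mat[of n m] zero_carrier_mat[of m n] c(5)] c KA K by (simp del: assoc_mult_mat)
  have s2: "four_block_mat (A1 * W1) (Kmat n m * A2 * W2) (0\<^sub>m m n) (0\<^sub>m m m) *
      four_block_mat (0\<^sub>m n n) (B1 * Lmat n m) (0\<^sub>m m n) B2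
     = four_block_mat (0\<^sub>m n n) (A1 * W1 * (B1 * Lmat n m) + Kmat n m * A2 * W2 * B2) (0\<^sub>m m n) (0\<^sub>m m m)"
    using mult_four_block_mat[of "A1 * W1" n n "Kmat n m * A2 * W2" m "0\<^sub>m m n" m "0\<^sub>m m m"
        "0\<^sub>m n n" n "B1 * Lmat n m" m "0\<^sub>m m n" B2] c KA BL K L by (simp del: assoc_mult_mat)
  have a1: "A1 * W1 * (B1 * Lmat n m) = x \<cdot>\<^sub>m Fmat n m"
  proof -
    have "A1 * W1 * (B1 * Lmat n m) = (A1 * W1 * B1) * Lmat n m"
      using c L by (simp add: assoc_mult_mat[of _ n n _ n _ m])
    also have "\<dots> = x \<cdot>\<^sub>m (E_mat n * Lmat n m)" unfolding e1
      using E1 L by (simp add: mult_smult_assoc_mat)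
    finally show ?thesis using EL[OF n1] by simp
  qed
  have a2: "Kmat n m * A2 * W2 * B2 = y \<cdot>\<^sub>m Fmat n m"
  proof -
    have "Kmat n m * A2 * W2 * B2 = Kmat n m * (A2 * W2 * B2)"
      using c K by (simp add: assoc_mult_mat[of _ n m _ m _ m])
    also have "\<dots> = y \<cdot>\<^sub>m (Kmat n m * E_mat m)" unfolding e2
      using E2 K by (simp add: mult_smult_distrib)
    finally show ?thesis using KE[OF m1] by simp
  qed
  have "x \<cdot>\<^sub>m Fmat n m + y \<cdot>\<^sub>m Fmat n m = (x + y) \<cdot>\<^sub>m Fmat n m"
    using F by (simp add: add_smult_distrib_right_mat)
  then show ?thesis using s1 s2 a1 a2 F_E[OF n1 m1] by simp
qed



definition kron :: "int mat \<Rightarrow> int mat \<Rightarrow> int mat" where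
  "kron X Y = mat (dim_row X * dim_row Y) (dim_col X * dim_col Y)
     (\<lambda>(i,j). X $$ (i div dim_row Y, j div dim_col Y) * Y $$ (i mod dim_row Y, j mod dim_col Y))"

lemma kron_carrier: "X \<in> carrier_mat n n \<Longrightarrow> Y \<in> carrier_mat m m \<Longrightarrow> kron X Y \<in> carrier_mat (n*m) (n*m)"
  unfolding kron_def by auto

lemma sum_reindex_prod: "(\<Sum>k\<in>{0..<a*b}. (f k :: int)) = (\<Sum>i<a. \<Sum>j<b. f (i*b+j :: nat))"
proof (induction a)
  case 0 then show ?case by simp
next
  case (Suc a)
  have "{0..<Suc a * b} = {0..<a*b} \<union> {a*b..<a*b+b}" by auto
  then have "(\<Sum>k\<in>{0..<Suc a*b}. f k) = (\<Sum>k\<in>{0..<a*b}. f k) + (\<Sum>k\<in>{a*b..<a*b+b}. f k)"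
    by (simp add: sum.union_disjoint ivl_disj_int)
  also have "(\<Sum>k\<in>{a*b..<a*b+b}. f k) = (\<Sum>j<b. f (a*b+j))"
  proof -
    have "(\<Sum>k\<in>{a*b..<a*b+b}. f k) = (\<Sum>j\<in>{0..<b}. f (j + a*b))"
      using sum.shift_bounds_nat_ivl[of f 0 "a*b" b] by (simp add: add.commute)
    then show ?thesis by (simp add: atLeast0LessThan add.commute)
  qed
  finally show ?case using Suc by simp
qed

lemma kron_mult:
  assumes "X \<in> carrier_mat n n" "Y \<in> carrier_mat m m" "X' \<in> carrier_mat n n" "Y' \<in> carrier_mat m m"
  shows "kron X Y * kron X' Y' = kron (X * X') (Y * Y')"
proof (rule eq_matI)
  show "dim_row (kron X Y * kron X' Y') = dim_row (kron (X * X') (Y * Y'))"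
    "dim_col (kron X Y * kron X' Y') = dim_col (kron (X * X') (Y * Y'))"
    using assms by (auto simp: kron_def)
  fix i j assume "i < dim_row (kron (X * X') (Y * Y'))" "j < dim_col (kron (X * X') (Y * Y'))"
  then have i: "i < n*m" and j: "j < n*m" using assms by (auto simp: kron_def)
  then have m0: "m > 0" by (cases m) auto
  have id: "i div m < n" "j div m < n" using i j by (auto simp: less_mult_imp_div_less)
  have im: "i mod m < m" "j mod m < m" using m0 by auto
  have "(kron X Y * kron X' Y') $$ (i,j) =
     (\<Sum>k\<in>{0..<n*m}. X $$ (i div m, k div m) * Y $$ (i mod m, k mod m) *
          (X' $$ (k div m, j div m) * Y' $$ (k mod m, j mod m)))"
    using assms i j by (auto simp: kron_def scalar_prod_def intro!: sum.cong)
  also have "\<dots> = (\<Sum>k1<n. \<Sum>k2<m. X $$ (i div m, k1) * X' $$ (k1, j div m) * (Y $$ (i mod m, k2) * Y' $$ (k2, j mod m)))"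
    unfolding sum_reindex_prod using m0 by (auto intro!: sum.cong simp: mult_ac)
  also have "\<dots> = (\<Sum>k1<n. X $$ (i div m, k1) * X' $$ (k1, j div m)) * (\<Sum>k2<m. Y $$ (i mod m, k2) * Y' $$ (k2, j mod m))"
    by (simp add: sum_product)
  also have "\<dots> = kron (X * X') (Y * Y') $$ (i,j)"
    using assms i j id im by (simp add: kron_def scalar_prod_def atLeast0LessThan)
  finally show "(kron X Y * kron X' Y') $$ (i,j) = kron (X * X') (Y * Y') $$ (i,j)" .
qed

lemma kron_one: "kron (1\<^sub>m n) (1\<^sub>m m) = 1\<^sub>m (n*m)"
proof (rule eq_matI)
  fix i j assume "i < dim_row (1\<^sub>m (n * m))" "j < dim_col (1\<^sub>m (n * m))"
  then have i: "i < n*m" and j: "j < n*m" by auto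
  then have m0: "m > 0" by (cases m) auto
  have id: "i div m < n" "j div m < n" using i j by (auto simp: less_mult_imp_div_less)
  have "(i div m = j div m \<and> i mod m = j mod m) = (i = j)"
    by (metis div_mult_mod_eq)
  then show "kron (1\<^sub>m n) (1\<^sub>m m) $$ (i, j) = 1\<^sub>m (n * m) $$ (i, j)"
    using i j id m0 by (auto simp: kron_def)
qed (auto simp: kron_def)

lemma kron_pow:
  assumes "X \<in> carrier_mat n n" "Y \<in> carrier_mat m m"
  shows "kron X Y ^\<^sub>m k = kron (X ^\<^sub>m k) (Y ^\<^sub>m k)"
proof (induction k)
  case 0
  then show ?case using assms kron_one[of n m] by (auto simp: kron_def)
next
  case (Suc k)
  have "kron (X ^\<^sub>m k) (Y ^\<^sub>m k) * kron X Y = kron (X ^\<^sub>m k * X) (Y ^\<^sub>m k * Y)"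
    by (rule kron_mult) (use assms in auto)
  then show ?case using Suc by simp
qed

lemma kron_word:
  assumes "M \<in> carrier_mat n n" "N \<in> carrier_mat n n" "M' \<in> carrier_mat m m" "N' \<in> carrier_mat m m"
  shows "word_prod (kron M M') (kron N N') a = kron (word_prod M N a) (word_prod M' N' a)"
proof (induction a rule: induct_list012)
  case 1
  then show ?case using assms kron_carrier[OF assms(1,3)] kron_one[of n m] by (simp add: kron_pow)
next
  case (2 x)
  then show ?case using assms by (simp add: kron_pow)
next
  case (3 x y xs)
  have "kron (M ^\<^sub>m x) (M' ^\<^sub>m x) * kron N N' = kron (M ^\<^sub>m x * N) (M' ^\<^sub>m x * N')"
    by (rule kron_mult) (use assms in auto)
  moreover have "kron (M ^\<^sub>m x * N) (M' ^\<^sub>m x * N') * kron (word_prod M N (y # xs)) (word_prod M' N' (y # xs))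
     = kron (M ^\<^sub>m x * N * word_prod M N (y # xs)) (M' ^\<^sub>m x * N' * word_prod M' N' (y # xs))"
    by (rule kron_mult) (use assms word_prod_carrier in auto)
  ultimately show ?case using 3 assms by (simp add: kron_pow)
qed

lemma kron_uptr:
  assumes "uptr_mat n X" "uptr_mat m Y"
  shows "uptr_mat (n*m) (kron X Y)"
  unfolding uptr_mat_def
proof
  show "kron X Y \<in> carrier_mat (n*m) (n*m)" using assms kron_carrier by (auto simp: uptr_mat_def)
  show "upper_triangular (kron X Y)"
  proof (rule upper_triangularI)
    fix i j assume ji: "j < i" and "i < dim_row (kron X Y)"
    then have i: "i < n*m" using assms by (auto simp: uptr_mat_def kron_def)
    then have m0: "m > 0" by (cases m) auto
    have id: "i div m < n" using i by (auto simp: less_mult_imp_div_less)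
    have d: "j div m \<le> i div m" using ji by (simp add: div_le_mono)
    have "j div m < i div m \<or> (j div m = i div m \<and> j mod m < i mod m)"
      using ji d by (metis div_mult_mod_eq le_neq_implies_less nat_add_left_cancel_less)
    then show "kron X Y $$ (i, j) = 0"
      using assms i ji id m0 by (auto simp: uptr_mat_def kron_def upper_triangular_def)
  qed
qed

lemma kron_E:
  assumes "n \<ge> 1" "m \<ge> 1"
  shows "kron (x \<cdot>\<^sub>m E_mat n) (y \<cdot>\<^sub>m E_mat m) = (x*y) \<cdot>\<^sub>m E_mat (n*m)"
proof (rule eq_matI)
  fix i j assume "i < dim_row ((x*y) \<cdot>\<^sub>m E_mat (n*m))" "j < dim_col ((x*y) \<cdot>\<^sub>m E_mat (n*m))"
  then have i: "i < n*m" and j: "j < n*m" by (auto simp: E_mat_def)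
  have id: "i div m < n" "j div m < n" using i j by (auto simp: less_mult_imp_div_less)
  have m0: "m > 0" using assms by auto
  have e1: "(i div m = 0 \<and> i mod m = 0) = (i = 0)" by (metis div_mult_mod_eq mult_0 add_0 div_0 mod_0)
  have e2: "(j div m = n - 1 \<and> j mod m = m - 1) = (j = n*m - 1)"
  proof
    assume "j div m = n - 1 \<and> j mod m = m - 1"
    then have "j = (n-1)*m + (m-1)" by (metis div_mult_mod_eq)
    then show "j = n*m - 1" using assms by (simp add: diff_mult_distrib)
  next
    assume h: "j = n*m - 1"
    have e: "n*m - 1 = (n-1)*m + (m-1)" using assms by (simp add: diff_mult_distrib)
    have r: "m - 1 < m" using m0 by simp
    have "((n-1)*m + (m-1)) div m = n - 1" using r m0 by (metis add_cancel_right_right div_mult_self3 div_less less_nat_zero_code mult.commute not_gr_zero)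
    moreover have "((n-1)*m + (m-1)) mod m = m - 1" using r by (metis mod_less mod_mult_self3 mult.commute)
    ultimately show "j div m = n - 1 \<and> j mod m = m - 1" using h e by simp
  qed
  show "kron (x \<cdot>\<^sub>m E_mat n) (y \<cdot>\<^sub>m E_mat m) $$ (i, j) = ((x*y) \<cdot>\<^sub>m E_mat (n*m)) $$ (i, j)"
    using i j id m0 e1 e2 by (auto simp: kron_def E_mat_def)
qed (auto simp: kron_def E_mat_def)


theorem lemma4p2:
  fixes t s1 s2 :: nat and p1 p2 :: int_mpoly
    and A1 M1 N1 B1 A2 M2 N2 B2 :: "int mat"
  assumes "t \<ge> 1"
    and "mpoly_in_vars t p1" and "mpoly_in_vars t p2"
    and "s1 \<ge> 1" and "s2 \<ge> 1"
    and "uptr_mat s1 A1" "uptr_mat s1 M1" "uptr_mat s1 N1" "uptr_mat s1 B1"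
    and "uptr_mat s2 A2" "uptr_mat s2 M2" "uptr_mat s2 N2" "uptr_mat s2 B2"
    and h1: "\<forall>a. length a = t \<longrightarrow>
               A1 * word_prod M1 N1 a * B1 = of_int (mpoly_eval p1 a) \<cdot>\<^sub>m E_mat s1"
    and h2: "\<forall>a. length a = t \<longrightarrow>
               A2 * word_prod M2 N2 a * B2 = of_int (mpoly_eval p2 a) \<cdot>\<^sub>m E_mat s2"
  shows "(\<exists>s3 A3 M3 N3 B3. s3 \<ge> 1 \<and> uptr_mat s3 A3 \<and> uptr_mat s3 M3 \<and> uptr_mat s3 N3 \<and>
            uptr_mat s3 B3 \<and>
            (\<forall>a. length a = t \<longrightarrow> A3 * word_prod M3 N3 a * B3 =
               of_int (mpoly_eval (p1 + p2) a) \<cdot>\<^sub>m E_mat s3))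
       \<and> (\<exists>s4 A4 M4 N4 B4. s4 \<ge> 1 \<and> uptr_mat s4 A4 \<and> uptr_mat s4 M4 \<and> uptr_mat s4 N4 \<and>
            uptr_mat s4 B4 \<and>
            (\<forall>a. length a = t \<longrightarrow> A4 * word_prod M4 N4 a * B4 =
               of_int (mpoly_eval (p1 * p2) a) \<cdot>\<^sub>m E_mat s4))
       \<and> (\<forall>c::int. \<exists>A5. uptr_mat s1 A5 \<and>
            (\<forall>a. length a = t \<longrightarrow> A5 * word_prod M1 N1 a * B1 =
               (c * mpoly_eval p1 a) \<cdot>\<^sub>m E_mat s1))"
proof -
  have c1: "A1 \<in> carrier_mat s1 s1" "M1 \<in> carrier_mat s1 s1" "N1 \<in> carrier_mat s1 s1" "B1 \<in> carrier_mat s1 s1"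
    using assms(6-9) by (auto simp: uptr_mat_def)
  have c2: "A2 \<in> carrier_mat s2 s2" "M2 \<in> carrier_mat s2 s2" "N2 \<in> carrier_mat s2 s2" "B2 \<in> carrier_mat s2 s2"
    using assms(10-13) by (auto simp: uptr_mat_def)
  have u1: "upper_triangular A1" "upper_triangular M1" "upper_triangular N1" "upper_triangular B1"
    using assms(6-9) by (auto simp: uptr_mat_def)
  have u2: "upper_triangular A2" "upper_triangular M2" "upper_triangular N2" "upper_triangular B2"
    using assms(10-13) by (auto simp: uptr_mat_def)
  have bdu: "uptr_mat (s1+s2) (bd X Y)" if "uptr_mat s1 X" "uptr_mat s2 Y" for X Y
  proof -
    have d: "dim_row X = s1" "dim_col X = s1" "dim_row Y = s2" "dim_col Y = s2" using that by (auto simp: uptr_mat_def)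
    show ?thesis unfolding uptr_mat_def bd_def d
      using that upper_triangular_four_block[of X s1 Y s2 "0\<^sub>m s1 s2"]
      by (auto simp: uptr_mat_def)
  qed
  have W1: "word_prod M1 N1 a \<in> carrier_mat s1 s1" for a using word_prod_carrier[OF c1(2,3)] .
  have W2: "word_prod M2 N2 a \<in> carrier_mat s2 s2" for a using word_prod_carrier[OF c2(2,3)] .
  show ?thesis
  proof (intro conjI)
    let ?A3 = "four_block_mat A1 (Kmat s1 s2 * A2) (0\<^sub>m s2 s1) (0\<^sub>m s2 s2)"
    let ?B3 = "four_block_mat (0\<^sub>m s1 s1) (B1 * Lmat s1 s2) (0\<^sub>m s2 s1) B2"
    have KA: "Kmat s1 s2 * A2 \<in> carrier_mat s1 s2" using c2 by (auto simp: Kmat_def)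
    have BL: "B1 * Lmat s1 s2 \<in> carrier_mat s1 s2" using c1 by (auto simp: Lmat_def)
    have uA: "uptr_mat (s1+s2) ?A3" unfolding uptr_mat_def
      using upper_triangular_four_block[OF c1(1) zero_carrier_mat[of s2 s2] u1(1) upper_triangular_zero, of "Kmat s1 s2 * A2"]
        c1 KA by auto
    have uB: "uptr_mat (s1+s2) ?B3" unfolding uptr_mat_def
      using upper_triangular_four_block[OF zero_carrier_mat[of s1 s1] c2(4) upper_triangular_zero u2(4), of "B1 * Lmat s1 s2"]
        c2 BL by auto
    show "\<exists>s3 A3 M3 N3 B3. s3 \<ge> 1 \<and> uptr_mat s3 A3 \<and> uptr_mat s3 M3 \<and> uptr_mat s3 N3 \<and>
            uptr_mat s3 B3 \<and>
            (\<forall>a. length a = t \<longrightarrow> A3 * word_prod M3 N3 a * B3 =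
               of_int (mpoly_eval (p1 + p2) a) \<cdot>\<^sub>m E_mat s3)"
    proof (intro exI conjI allI impI)
      show "1 \<le> s1 + s2" using assms(4) by simp
      show "uptr_mat (s1+s2) ?A3" by (rule uA)
      show "uptr_mat (s1+s2) (bd M1 M2)" by (rule bdu) (use assms in auto)
      show "uptr_mat (s1+s2) (bd N1 N2)" by (rule bdu) (use assms in auto)
      show "uptr_mat (s1+s2) ?B3" by (rule uB)
      fix a :: "nat list" assume "length a = t"
      then have e1: "A1 * word_prod M1 N1 a * B1 = mpoly_eval p1 a \<cdot>\<^sub>m E_mat s1"
        and e2: "A2 * word_prod M2 N2 a * B2 = mpoly_eval p2 a \<cdot>\<^sub>m E_mat s2"
        using h1 h2 by auto
      show "?A3 * word_prod (bd M1 M2) (bd N1 N2) a * ?B3 = of_int (mpoly_eval (p1 + p2) a) \<cdot>\<^sub>m E_mat (s1+s2)"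
        using part_sum[OF assms(4,5) c1(1) W1 c1(4) c2(1) W2 c2(4) e1 e2]
        by (simp add: bd_word[OF c1(2,3) c2(2,3)] eval_add del: assoc_mult_mat)
    qed
  next
    show "\<exists>s4 A4 M4 N4 B4. s4 \<ge> 1 \<and> uptr_mat s4 A4 \<and> uptr_mat s4 M4 \<and> uptr_mat s4 N4 \<and>
            uptr_mat s4 B4 \<and>
            (\<forall>a. length a = t \<longrightarrow> A4 * word_prod M4 N4 a * B4 =
               of_int (mpoly_eval (p1 * p2) a) \<cdot>\<^sub>m E_mat s4)"
    proof (intro exI conjI allI impI)
      show "1 \<le> s1 * s2" using assms(4,5) by simp
      show "uptr_mat (s1*s2) (kron A1 A2)" "uptr_mat (s1*s2) (kron M1 M2)"
        "uptr_mat (s1*s2) (kron N1 N2)" "uptr_mat (s1*s2) (kron B1 B2)"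
        using kron_uptr assms(6-13) by auto
      fix a :: "nat list" assume "length a = t"
      then have e1: "A1 * word_prod M1 N1 a * B1 = mpoly_eval p1 a \<cdot>\<^sub>m E_mat s1"
        and e2: "A2 * word_prod M2 N2 a * B2 = mpoly_eval p2 a \<cdot>\<^sub>m E_mat s2"
        using h1 h2 by auto
      have "kron A1 A2 * kron (word_prod M1 N1 a) (word_prod M2 N2 a) = kron (A1 * word_prod M1 N1 a) (A2 * word_prod M2 N2 a)"
        by (rule kron_mult[OF c1(1) c2(1) W1 W2])
      moreover have "kron (A1 * word_prod M1 N1 a) (A2 * word_prod M2 N2 a) * kron B1 B2
          = kron (A1 * word_prod M1 N1 a * B1) (A2 * word_prod M2 N2 a * B2)"
        by (rule kron_mult) (use c1 c2 W1 W2 in auto)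
      ultimately show "kron A1 A2 * word_prod (kron M1 M2) (kron N1 N2) a * kron B1 B2 = of_int (mpoly_eval (p1 * p2) a) \<cdot>\<^sub>m E_mat (s1*s2)"
        unfolding kron_word[OF c1(2,3) c2(2,3)] eval_mult of_int_eq_id id_apply
        using kron_E[OF assms(4,5)] e1 e2 by simp
    qed
  next
    show "\<forall>c::int. \<exists>A5. uptr_mat s1 A5 \<and>
            (\<forall>a. length a = t \<longrightarrow> A5 * word_prod M1 N1 a * B1 =
               (c * mpoly_eval p1 a) \<cdot>\<^sub>m E_mat s1)"
    proof (intro allI exI conjI impI)
      fix c :: int
      show "uptr_mat s1 (c \<cdot>\<^sub>m A1)" using assms(6)
        by (auto simp: uptr_mat_def upper_triangular_def)
      fix a :: "nat list" assume "length a = t"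
      then have e1: "A1 * word_prod M1 N1 a * B1 = mpoly_eval p1 a \<cdot>\<^sub>m E_mat s1"
        using h1 by auto
      have "c \<cdot>\<^sub>m A1 * word_prod M1 N1 a * B1 = c \<cdot>\<^sub>m (A1 * word_prod M1 N1 a * B1)"
        using c1 W1 by (simp add: mult_smult_assoc_mat[of _ s1 s1 _ s1] del: assoc_mult_mat)
      then show "c \<cdot>\<^sub>m A1 * word_prod M1 N1 a * B1 = (c * mpoly_eval p1 a) \<cdot>\<^sub>m E_mat s1"
        unfolding e1 by (auto intro!: eq_matI simp: E_mat_def)
    qed
  qed
qed

end
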